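(* Let $L_4=(\partial^2+V(x))^2+U(x)\partial+W(x)$ with $U,V,W\in\mathbf{C}[x]$ be an irreducible operator of order $4$ in $A_1(\mathbf{C})$, and assume $\deg V>\max\{\tfrac12\deg U,\tfrac12\deg W\}$. Then every $M\in A_1(\mathbf{C})$ commuting with $L_4$ has even order.
   Context: $A_1(\mathbf{C})$ is the first Weyl algebra (operators with polynomial coefficients in $x$, $\partial=d/dx$, $[\partial,x]=1$). Irreducible means $L_4$ is not a product of two operators of positive order in $A_1(\mathbf{C})$. The degree of the zero polynomial is $-\infty$. *)

theory Defs
  imports "HOL-Computational_Algebra.Polynomial"
begin

text \<open>An operator sum_i p_i(x) d^i (coefficients on
the left, normal form) is represented as the polynomial in d with coefficients in
C[x], i.e. an element of type complex poly poly: coeff A i = p_i.\<close>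

type_synonym weyl = "complex poly poly"

text \<open>Multiplication via the Leibniz rule
  (p d^i)(q d^j) = sum_k (i choose k) p q^(k) d^(i+j-k).\<close>
definition weyl_mult :: "weyl \<Rightarrow> weyl \<Rightarrow> weyl" where
  "weyl_mult A B =
     (\<Sum>i\<le>degree A. \<Sum>j\<le>degree B. \<Sum>k\<le>i.
        monom (smult (of_nat (i choose k)) (coeff A i * (pderiv ^^ k) (coeff B j))) (i + j - k))"

definition weyl_D :: weyl where "weyl_D = monom 1 1"
definition weyl_poly :: "complex poly \<Rightarrow> weyl" where "weyl_poly p = [:p:]"

definition weyl_order :: "weyl \<Rightarrow> nat" where "weyl_order A = degree A"

definition weyl_irreducible :: "weyl \<Rightarrow> bool" where
  "weyl_irreducible L \<longleftrightarrow>
     \<not> (\<exists>A B. weyl_order A > 0 \<and> weyl_order B > 0 \<and> L = weyl_mult A B)"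

definition L4 :: "complex poly \<Rightarrow> complex poly \<Rightarrow> complex poly \<Rightarrow> weyl" where
  "L4 U V W =
     (let P = weyl_mult weyl_D weyl_D + weyl_poly V
      in weyl_mult P P + weyl_mult (weyl_poly U) weyl_D + weyl_poly W)"

end

theory Submission
  imports Defs "HOL-Computational_Algebra.Fundamental_Theorem_Algebra"
begin

definition T :: "nat \<Rightarrow> nat \<Rightarrow> weyl \<Rightarrow> weyl \<Rightarrow> weyl" where
  "T N k A B = (\<Sum>i\<le>N. \<Sum>j\<le>N.
      monom (smult (of_nat (i choose k)) (coeff A i * (pderiv ^^ k) (coeff B j))) (i + j - k))"

lemma weyl_mult_T:
  assumes "degree A \<le> N" "degree B \<le> N"
  shows "weyl_mult A B = (\<Sum>k\<le>N. T N k A B)"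
proof -
  define X where "X i j k = monom (smult (of_nat (i choose k)) (coeff A i * (pderiv ^^ k) (coeff B j))) (i + j - k)" for i j k
  have 1: "(\<Sum>k\<le>i. X i j k) = (\<Sum>k\<le>N. X i j k)" if "i \<le> N" for i j
    by (rule sum.mono_neutral_left) (use that in \<open>auto simp: X_def\<close>)
  have 2: "(\<Sum>i\<le>degree A. \<Sum>j\<le>degree B. \<Sum>k\<le>N. X i j k) = (\<Sum>i\<le>N. \<Sum>j\<le>degree B. \<Sum>k\<le>N. X i j k)"
    by (rule sum.mono_neutral_left) (use assms in \<open>auto simp: X_def coeff_eq_0\<close>)
  have 3: "(\<Sum>j\<le>degree B. \<Sum>k\<le>N. X i j k) = (\<Sum>j\<le>N. \<Sum>k\<le>N. X i j k)" for i
    by (rule sum.mono_neutral_left) (use assms in \<open>auto simp: X_def coeff_eq_0\<close>)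
  have "weyl_mult A B = (\<Sum>i\<le>degree A. \<Sum>j\<le>degree B. \<Sum>k\<le>i. X i j k)"
    unfolding weyl_mult_def X_def by simp
  also have "\<dots> = (\<Sum>i\<le>degree A. \<Sum>j\<le>degree B. \<Sum>k\<le>N. X i j k)"
    using assms by (intro sum.cong refl 1) auto
  also have "\<dots> = (\<Sum>i\<le>N. \<Sum>j\<le>N. \<Sum>k\<le>N. X i j k)" using 2 3 by simp
  also have "\<dots> = (\<Sum>k\<le>N. \<Sum>i\<le>N. \<Sum>j\<le>N. X i j k)"
    by (subst sum.swap) (subst (2) sum.swap, rule refl)
  finally show ?thesis unfolding T_def X_def .
qed

definition cf :: "weyl \<Rightarrow> nat \<Rightarrow> nat \<Rightarrow> complex" where
  "cf A a i = coeff (coeff A i) a"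

definition dh :: "nat \<Rightarrow> nat \<Rightarrow> nat \<Rightarrow> weyl \<Rightarrow> complex poly" where
  "dh al be D A = (\<Sum>i\<le>degree A. monom (\<Sum>a\<le>D. if al*a+be*i = D then cf A a i else 0) i)"

definition dhx :: "nat \<Rightarrow> nat \<Rightarrow> nat \<Rightarrow> weyl \<Rightarrow> complex poly" where
  "dhx al be D A = (\<Sum>i\<le>degree A. monom (\<Sum>a\<le>D. if al*a+be*i = D then of_nat a * cf A a i else 0) i)"

lemma cf_eq_0: "degree A < i \<Longrightarrow> cf A a i = 0"
  by (simp add: cf_def coeff_eq_0)

lemma coeff_dh: "coeff (dh al be D A) i = (\<Sum>a\<le>D. if al*a+be*i = D then cf A a i else 0)"
proof (cases "i \<le> degree A")
  case True
  then show ?thesis unfolding dh_def by (simp add: coeff_sum coeff_monom)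
next
  case False
  then have "\<And>a. cf A a i = 0" by (simp add: cf_eq_0)
  with False show ?thesis unfolding dh_def by (auto simp add: coeff_sum coeff_monom intro!: sum.neutral)
qed

lemma coeff_dhx: "coeff (dhx al be D A) i = (\<Sum>a\<le>D. if al*a+be*i = D then of_nat a * cf A a i else 0)"
proof (cases "i \<le> degree A")
  case True
  then show ?thesis unfolding dhx_def by (simp add: coeff_sum coeff_monom)
next
  case False
  then have "\<And>a. cf A a i = 0" by (simp add: cf_eq_0)
  with False show ?thesis unfolding dhx_def by (auto simp add: coeff_sum coeff_monom intro!: sum.neutral)
qed

lemma cf_add: "cf (A + B) a i = cf A a i + cf B a i"
  by (simp add: cf_def)

lemma cf_sum: "cf (\<Sum>x\<in>S. f x) a i = (\<Sum>x\<in>S. cf (f x) a i)"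
  by (induction S rule: infinite_finite_induct) (auto simp: cf_add cf_def)

lemma cf_monom_monom: "cf (monom (monom c e) m) a i = (if i = m \<and> a = e then c else 0)"
  by (simp add: cf_def coeff_monom)

lemma if_sum: "(if P then sum g S else 0) = sum (\<lambda>x. if P then g x else 0) S"
  by simp

lemma dh_sum: "dh al be D (\<Sum>x\<in>S. f x) = (\<Sum>x\<in>S. dh al be D (f x))"
  by (rule poly_eqI) (simp only: coeff_dh coeff_sum cf_sum if_sum, rule sum.swap)

lemma dhx_sum: "dhx al be D (\<Sum>x\<in>S. f x) = (\<Sum>x\<in>S. dhx al be D (f x))"
  by (rule poly_eqI) (simp only: coeff_dhx coeff_sum cf_sum if_sum sum_distrib_left, rule sum.swap)

lemma sum_delta_gen1: "finite A \<Longrightarrow> (\<Sum>a\<in>A. if P a then (if a = e then c else 0) else 0) = (if e \<in> A \<and> P e then c else 0)"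
proof -
  assume "finite A"
  have "(\<Sum>a\<in>A. if P a then (if a = e then c else 0) else 0) = (\<Sum>a\<in>A. if a = e then (if P e then c else 0) else 0)"
    by (rule sum.cong) auto
  also have "\<dots> = (if e \<in> A \<and> P e then c else 0)" using \<open>finite A\<close> by simp
  finally show ?thesis .
qed

lemma sum_delta_gen2: "finite A \<Longrightarrow> (c::complex) = c \<Longrightarrow> (\<Sum>a\<in>A. if P a then g a * (if a = e then c else 0) else 0) = (if e \<in> A \<and> P e then g e * c else 0)"
proof -
  assume "finite A" "c = c"
  have "(\<Sum>a\<in>A. if P a then g a * (if a = e then c else 0) else 0) = (\<Sum>a\<in>A. if a = e then (if P e then g e * c else 0) else 0)"
    by (rule sum.cong) auto
  also have "\<dots> = (if e \<in> A \<and> P e then g e * c else 0)" using \<open>finite A\<close> by simp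
  finally show ?thesis .
qed

lemma dh_monom_monom:
  assumes "al > 0"
  shows "dh al be D (monom (monom c e) m) = (if al*e+be*m = D then monom c m else 0)"
proof (rule poly_eqI)
  fix i
  have "e \<le> D" if "al*e+be*m = D"
  proof -
    have "e \<le> al * e" using assms by simp
    then show ?thesis using that by linarith
  qed
  then show "coeff (dh al be D (monom (monom c e) m)) i = coeff (if al*e+be*m = D then monom c m else 0) i"
    by (auto simp: coeff_dh cf_monom_monom coeff_monom if_distrib[of "\<lambda>x. x = 0"] sum_delta_gen1 cong: if_cong)
qed

lemma dhx_monom_monom:
  assumes "al > 0"
  shows "dhx al be D (monom (monom c e) m) = (if al*e+be*m = D then monom (of_nat e * c) m else 0)"
proof (rule poly_eqI)
  fix i
  have "e \<le> D" if "al*e+be*m = D"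
  proof -
    have "e \<le> al * e" using assms by simp
    then show ?thesis using that by linarith
  qed
  then show "coeff (dhx al be D (monom (monom c e) m)) i = coeff (if al*e+be*m = D then monom (of_nat e * c) m else 0) i"
    by (auto simp: coeff_dhx cf_monom_monom coeff_monom sum_delta_gen2 cong: if_cong)
qed

lemma dh_0[simp]: "dh al be D 0 = 0"
  by (rule poly_eqI) (simp add: coeff_dh cf_def cong: if_cong)
lemma dhx_0[simp]: "dhx al be D 0 = 0"
  by (rule poly_eqI) (simp add: coeff_dhx cf_def cong: if_cong)

lemma dh_if: "dh al be D (if P then A else 0) = (if P then dh al be D A else 0)"
  by simp
lemma dhx_if: "dhx al be D (if P then A else 0) = (if P then dhx al be D A else 0)"
  by simp

definition bdd :: "nat \<Rightarrow> weyl \<Rightarrow> bool" where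
  "bdd N A \<longleftrightarrow> degree A \<le> N \<and> (\<forall>i. degree (coeff A i) \<le> N)"

lemma expand:
  assumes "bdd N A"
  shows "A = (\<Sum>i\<le>N. \<Sum>a\<le>N. monom (monom (cf A a i) a) i)"
proof -
  have "A = (\<Sum>i\<le>N. monom (coeff A i) i)"
    using assms by (simp add: bdd_def poly_as_sum_of_monoms')
  also have "\<dots> = (\<Sum>i\<le>N. monom (\<Sum>a\<le>N. monom (cf A a i) a) i)"
    using assms by (simp add: bdd_def poly_as_sum_of_monoms' cf_def)
  finally show ?thesis by (simp add: monom_sum)
qed

lemma higher_pderiv_monom':
  "(pderiv ^^ k) (monom (c::complex) b) = (if k \<le> b then monom (pochhammer (of_nat (b-k+1)) k * c) (b - k) else 0)"
  by (rule poly_eqI) (auto simp: coeff_higher_pderiv coeff_monom Suc_diff_le)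

lemma coeff_expand: "bdd N A \<Longrightarrow> coeff A i = (\<Sum>a\<le>N. monom (cf A a i) a)"
  by (simp add: bdd_def poly_as_sum_of_monoms' cf_def)

lemma smult_sum_right: "smult c (\<Sum>x\<in>S. f x) = (\<Sum>x\<in>S. smult c (f x))"
  by (induction S rule: infinite_finite_induct) (auto simp: smult_add_right)

lemma T_expand:
  assumes "bdd N A" "bdd N B"
  shows "T N k A B = (\<Sum>i\<le>N. \<Sum>j\<le>N. \<Sum>a\<le>N. \<Sum>b\<le>N. if k \<le> b then
     monom (monom (of_nat (i choose k) * cf A a i * (pochhammer (of_nat (b-k+1)) k * cf B b j)) (a + (b-k))) (i+j-k) else 0)"
proof -
  have eq: "monom (smult (of_nat (i choose k)) (coeff A i * (pderiv ^^ k) (coeff B j))) (i + j - k)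
     = (\<Sum>a\<le>N. \<Sum>b\<le>N. if k \<le> b then
     monom (monom (of_nat (i choose k) * cf A a i * (pochhammer (of_nat (b-k+1)) k * cf B b j)) (a + (b-k))) (i+j-k) else 0)" for i j
  proof -
    have "coeff A i * (pderiv ^^ k) (coeff B j) =
       (\<Sum>a\<le>N. \<Sum>b\<le>N. monom (cf A a i) a * (pderiv ^^ k) (monom (cf B b j) b))"
      by (simp add: coeff_expand[OF assms(1)] coeff_expand[OF assms(2)] higher_pderiv_sum sum_distrib_left sum_distrib_right, rule sum.swap)
    also have "\<dots> = (\<Sum>a\<le>N. \<Sum>b\<le>N. if k \<le> b then monom (cf A a i * (pochhammer (of_nat (b-k+1)) k * cf B b j)) (a + (b-k)) else 0)"
      by (intro sum.cong refl) (simp add: higher_pderiv_monom' mult_monom)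
    finally have X: "coeff A i * (pderiv ^^ k) (coeff B j) = (\<Sum>a\<le>N. \<Sum>b\<le>N. if k \<le> b then monom (cf A a i * (pochhammer (of_nat (b-k+1)) k * cf B b j)) (a + (b-k)) else 0)" .
    show ?thesis unfolding X smult_sum_right monom_sum
      by (intro sum.cong refl) (simp add: smult_monom mult.assoc)
  qed
  show ?thesis unfolding T_def by (simp add: eq)
qed

lemma dh_T:
  assumes "bdd N A" "bdd N B" "al > 0"
  shows "dh al be W (T N k A B) = (\<Sum>i\<le>N. \<Sum>j\<le>N. \<Sum>a\<le>N. \<Sum>b\<le>N. if k \<le> b \<and> al*(a + (b-k)) + be*(i+j-k) = W then
     monom (of_nat (i choose k) * cf A a i * (pochhammer (of_nat (b-k+1)) k * cf B b j)) (i+j-k) else 0)"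
  unfolding T_expand[OF assms(1,2)] dh_sum using assms(3)
  by (intro sum.cong refl) (simp add: dh_monom_monom)

definition wb :: "nat \<Rightarrow> nat \<Rightarrow> nat \<Rightarrow> weyl \<Rightarrow> bool" where
  "wb al be D A \<longleftrightarrow> (\<forall>a i. cf A a i \<noteq> 0 \<longrightarrow> al*a + be*i \<le> D)"

lemma arithB:
  fixes al be :: nat
  assumes "al > 0" "2 \<le> k" "k \<le> b" "k \<le> i" "al*a+be*i \<le> DA" "al*b+be*j \<le> DB"
    "al*(a+(b-k)) + be*(i+j-k) = W" "W + al + be = DA + DB"
  shows False
proof -
  obtain b' where b: "b = b' + k" using assms(3) le_Suc_ex by (metis add.commute)
  obtain i' where i: "i = i' + k" using assms(4) le_Suc_ex by (metis add.commute)
  have e1: "al*(a+b') + be*(i'+j) = W" using assms(7) by (simp add: b i)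
  have "al*k \<ge> al*2" "be*k \<ge> be*2" using assms(2) by simp_all
  moreover have "al*a + be*i' + be*k \<le> DA" using assms(5) by (simp add: i algebra_simps)
  moreover have "al*b' + al*k + be*j \<le> DB" using assms(6) by (simp add: b algebra_simps)
  moreover have "al*a + al*b' + be*i' + be*j = W" using e1 by (simp add: algebra_simps)
  ultimately show False using assms(1,8) by linarith
qed

lemma arithC:
  fixes al be :: nat
  assumes "1 \<le> b" "1 \<le> i" "al*a+be*i \<le> DA" "al*b+be*j \<le> DB" "W + al + be = DA + DB"
  shows "(al*(a+(b-1)) + be*(i+j-1) = W) \<longleftrightarrow> (al*a+be*i = DA \<and> al*b+be*j = DB)"
proof -
  obtain b' where b: "b = b' + 1" using assms(1) le_Suc_ex by (metis add.commute)
  obtain i' where i: "i = i' + 1" using assms(2) le_Suc_ex by (metis add.commute)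
  have "al*(a+(b-1)) + be*(i+j-1) + al + be = al*a+be*i + (al*b+be*j)"
    by (simp add: b i algebra_simps)
  then show ?thesis using assms(3,4,5) by linarith
qed

lemma dh_T_high:
  assumes "bdd N A" "bdd N B" "al > 0" "wb al be DA A" "wb al be DB B" "W + al + be = DA + DB" "2 \<le> k"
  shows "dh al be W (T N k A B) = 0"
  unfolding dh_T[OF assms(1-3)]
proof (intro sum.neutral ballI)
  fix i j a b
  show "(if k \<le> b \<and> al*(a + (b-k)) + be*(i+j-k) = W then
     monom (of_nat (i choose k) * cf A a i * (pochhammer (of_nat (b-k+1)) k * cf B b j)) (i+j-k) else 0) = 0"
  proof (cases "k \<le> b \<and> al*(a + (b-k)) + be*(i+j-k) = W \<and> k \<le> i \<and> cf A a i \<noteq> 0 \<and> cf B b j \<noteq> 0")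
    case True
    then have "al*a+be*i \<le> DA" "al*b+be*j \<le> DB" using assms(4,5) unfolding wb_def by auto
    with True arithB[OF assms(3,7)] assms(6) show ?thesis by blast
  next
    case False
    then show ?thesis by auto
  qed
qed

lemma dh_expand:
  assumes "bdd N A" "al > 0"
  shows "dh al be D A = (\<Sum>i\<le>N. \<Sum>a\<le>N. if al*a+be*i = D then monom (cf A a i) i else 0)"
  by (subst expand[OF assms(1)]) (simp add: dh_sum dh_monom_monom assms(2))

lemma dhx_expand:
  assumes "bdd N A" "al > 0"
  shows "dhx al be D A = (\<Sum>i\<le>N. \<Sum>a\<le>N. if al*a+be*i = D then monom (of_nat a * cf A a i) i else 0)"
  by (subst expand[OF assms(1)]) (simp add: dhx_sum dhx_monom_monom assms(2))

lemma pderiv_sum': "pderiv (\<Sum>x\<in>S. f x) = (\<Sum>x\<in>S. pderiv (f x))"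
  by (induction S rule: infinite_finite_induct) (auto simp: pderiv_add)

lemma dh_T1:
  assumes "bdd N A" "bdd N B" "al > 0" "wb al be DA A" "wb al be DB B" "W + al + be = DA + DB"
  shows "dh al be W (T N 1 A B) = pderiv (dh al be DA A) * dhx al be DB B"
proof -
  have R: "pderiv (dh al be DA A) * dhx al be DB B = (\<Sum>i\<le>N. \<Sum>a\<le>N. \<Sum>j\<le>N. \<Sum>b\<le>N.
     if al*a+be*i = DA \<and> al*b+be*j = DB then monom (of_nat i * cf A a i * (of_nat b * cf B b j)) (i - 1 + j) else 0)"
    unfolding dh_expand[OF assms(1,3)] dhx_expand[OF assms(2,3)] pderiv_sum'
    unfolding sum_distrib_right
    unfolding sum_distrib_left
    by (intro sum.cong refl) (simp add: pderiv_monom mult_monom)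
  have L: "dh al be W (T N 1 A B) = (\<Sum>i\<le>N. \<Sum>a\<le>N. \<Sum>j\<le>N. \<Sum>b\<le>N.
     if 1 \<le> b \<and> al*(a + (b-1)) + be*(i+j-1) = W then monom (of_nat i * cf A a i * (of_nat b * cf B b j)) (i + j - 1) else 0)"
    unfolding dh_T[OF assms(1-3)]
    apply (rule sum.cong[OF refl])
    apply (rule trans[OF sum.swap])
    apply (intro sum.cong refl)
    apply (simp cong: if_cong)
    done
  show ?thesis unfolding L R
  proof (intro sum.cong refl)
    fix i a j b
    show "(if 1 \<le> b \<and> al*(a + (b-1)) + be*(i+j-1) = W then monom (of_nat i * cf A a i * (of_nat b * cf B b j)) (i + j - 1) else 0)
       = (if al*a+be*i = DA \<and> al*b+be*j = DB then monom (of_nat i * cf A a i * (of_nat b * cf B b j)) (i - 1 + j) else 0)"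
    proof (cases "1 \<le> b \<and> 1 \<le> i \<and> cf A a i \<noteq> 0 \<and> cf B b j \<noteq> 0")
      case True
      then have "al*a+be*i \<le> DA" "al*b+be*j \<le> DB" using assms(4,5) unfolding wb_def by auto
      with True arithC[of b i al a be DA j DB W] assms(6) show ?thesis
        by (simp add: add.commute)
    next
      case False
      then have "i = 0 \<or> b = 0 \<or> cf A a i = 0 \<or> cf B b j = 0" by auto
      then show ?thesis by auto
    qed
  qed
qed

lemma T0:
  assumes "bdd N A" "bdd N B"
  shows "T N 0 A B = A * B"
proof -
  have "A * B = (\<Sum>i\<le>N. monom (coeff A i) i) * (\<Sum>j\<le>N. monom (coeff B j) j)"
    using assms by (simp add: bdd_def poly_as_sum_of_monoms')
  also have "\<dots> = (\<Sum>i\<le>N. \<Sum>j\<le>N. monom (coeff A i * coeff B j) (i + j))"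
    unfolding sum_distrib_right unfolding sum_distrib_left by (simp add: mult_monom)
  finally show ?thesis unfolding T_def by simp
qed

lemma comm_id:
  assumes "bdd N L" "bdd N M" "2 \<le> N" "al > 0" "wb al be DL L" "wb al be DM M"
    "al + be \<le> DL + DM" "weyl_mult L M = weyl_mult M L"
  shows "pderiv (dh al be DL L) * dhx al be DM M = pderiv (dh al be DM M) * dhx al be DL L"
proof -
  define W where "W = DL + DM - al - be"
  have W1: "W + al + be = DL + DM" and W2: "W + al + be = DM + DL" using assms(7) by (auto simp: W_def)
  obtain N' where N: "N = Suc (Suc N')" using assms(3) by (metis add_2_eq_Suc le_Suc_ex)
  have dL: "degree L \<le> N" and dM: "degree M \<le> N" using assms(1,2) by (auto simp: bdd_def)
  have "dh al be W (weyl_mult L M) = (\<Sum>k\<le>N. dh al be W (T N k L M))"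
    by (simp add: weyl_mult_T[OF dL dM] dh_sum)
  also have "\<dots> = dh al be W (T N 0 L M) + (dh al be W (T N 1 L M) + (\<Sum>k\<le>N'. dh al be W (T N (Suc (Suc k)) L M)))"
    unfolding N by (simp add: sum.atMost_Suc_shift del: sum.atMost_Suc)
  also have "(\<Sum>k\<le>N'. dh al be W (T N (Suc (Suc k)) L M)) = 0"
    by (intro sum.neutral ballI dh_T_high[OF assms(1,2,4,5,6) W1]) simp
  finally have 1: "dh al be W (weyl_mult L M) = dh al be W (L * M) + pderiv (dh al be DL L) * dhx al be DM M"
    by (simp add: T0[OF assms(1,2)] dh_T1[OF assms(1,2,4,5,6) W1, unfolded One_nat_def])
  have "dh al be W (weyl_mult M L) = (\<Sum>k\<le>N. dh al be W (T N k M L))"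
    by (simp add: weyl_mult_T[OF dM dL] dh_sum)
  also have "\<dots> = dh al be W (T N 0 M L) + (dh al be W (T N 1 M L) + (\<Sum>k\<le>N'. dh al be W (T N (Suc (Suc k)) M L)))"
    unfolding N by (simp add: sum.atMost_Suc_shift del: sum.atMost_Suc)
  also have "(\<Sum>k\<le>N'. dh al be W (T N (Suc (Suc k)) M L)) = 0"
    by (intro sum.neutral ballI dh_T_high[OF assms(2,1,4,6,5) W2]) simp
  finally have 2: "dh al be W (weyl_mult M L) = dh al be W (M * L) + pderiv (dh al be DM M) * dhx al be DL L"
    by (simp add: T0[OF assms(2,1)] dh_T1[OF assms(2,1,4,6,5) W2, unfolded One_nat_def])
  show ?thesis using 1 2 assms(8) by (simp add: mult.commute)
qed

lemma euler:
  assumes "al > 0"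
  shows "smult (of_nat al) (dhx al be D A) = smult (of_nat D) (dh al be D A) - smult (of_nat be) (pCons 0 (pderiv (dh al be D A)))"
proof (rule poly_eqI)
  fix i
  have key: "of_nat al * (of_nat a * x) = of_nat D * x - of_nat be * (of_nat i * x)"
    if "al*a+be*i = D" for a and x :: complex
  proof -
    have "(of_nat D :: complex) = of_nat al * of_nat a + of_nat be * of_nat i"
      using that[symmetric] by simp
    then show ?thesis by (simp add: algebra_simps)
  qed
  have c: "coeff (pCons 0 (pderiv (dh al be D A))) i = of_nat i * coeff (dh al be D A) i"
    by (cases i) (simp_all add: coeff_pderiv)
  have "coeff (smult (of_nat D) (dh al be D A) - smult (of_nat be) (pCons 0 (pderiv (dh al be D A)))) i
     = of_nat D * coeff (dh al be D A) i - of_nat be * (of_nat i * coeff (dh al be D A) i)"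
    by (simp only: coeff_diff coeff_smult c)
  also have "\<dots> = (\<Sum>a\<le>D. of_nat D * (if al*a+be*i = D then cf A a i else 0) - of_nat be * (of_nat i * (if al*a+be*i = D then cf A a i else 0)))"
    by (simp add: coeff_dh sum_distrib_left sum_subtractf)
  also have "\<dots> = (\<Sum>a\<le>D. of_nat al * (if al*a+be*i = D then of_nat a * cf A a i else 0))"
    by (intro sum.cong refl) (auto simp: key)
  also have "\<dots> = coeff (smult (of_nat al) (dhx al be D A)) i"
    by (simp add: coeff_dhx sum_distrib_left)
  finally show "coeff (smult (of_nat al) (dhx al be D A)) i = coeff (smult (of_nat D) (dh al be D A) - smult (of_nat be) (pCons 0 (pderiv (dh al be D A)))) i"
    by simp
qed

lemma deriv_rel:
  assumes "al > 0"
    and "pderiv (dh al be DL L) * dhx al be DM M = pderiv (dh al be DM M) * dhx al be DL L"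
  shows "smult (of_nat DM) (pderiv (dh al be DL L) * dh al be DM M) = smult (of_nat DL) (dh al be DL L * pderiv (dh al be DM M))"
proof -
  define F where "F = dh al be DL L"
  define G where "G = dh al be DM M"
  have eF: "smult (of_nat al) (dhx al be DL L) = smult (of_nat DL) F - smult (of_nat be) (pCons 0 (pderiv F))"
    unfolding F_def by (rule euler[OF assms(1)])
  have eG: "smult (of_nat al) (dhx al be DM M) = smult (of_nat DM) G - smult (of_nat be) (pCons 0 (pderiv G))"
    unfolding G_def by (rule euler[OF assms(1)])
  have "smult (of_nat al) (pderiv F * dhx al be DM M) = smult (of_nat al) (pderiv G * dhx al be DL L)"
    using assms(2) unfolding F_def G_def by simp
  then have "pderiv F * smult (of_nat al) (dhx al be DM M) = pderiv G * smult (of_nat al) (dhx al be DL L)"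
    by (simp add: mult_smult_right)
  then have "pderiv F * (smult (of_nat DM) G - smult (of_nat be) (pCons 0 (pderiv G))) =
             pderiv G * (smult (of_nat DL) F - smult (of_nat be) (pCons 0 (pderiv F)))"
    unfolding eF eG .
  then have E: "smult (of_nat DM) (pderiv F * G) - smult (of_nat be) (pderiv F * pCons 0 (pderiv G)) =
             smult (of_nat DL) (F * pderiv G) - smult (of_nat be) (pderiv G * pCons 0 (pderiv F))"
    by (simp add: algebra_simps)
  have X: "pderiv F * pCons 0 (pderiv G) = pderiv G * pCons 0 (pderiv F)"
    by (simp add: mult.commute)
  have "smult (of_nat DM) (pderiv F * G) = smult (of_nat DL) (F * pderiv G)"
    using E[unfolded X] by (metis diff_add_cancel)
  then show ?thesis unfolding F_def G_def .
qed

lemma qpow: "[:-r,1:] * pderiv ([:-r,1:]^e) = smult (of_nat e) ([:-r,1:]^e :: complex poly)"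
proof (cases e)
  case (Suc n)
  have d: "pderiv [:-r,1:] = (1 :: complex poly)" by (simp add: pderiv_pCons)
  show ?thesis unfolding Suc pderiv_power_Suc d
    by (simp only: mult_1_right mult_smult_right power_Suc)
qed simp

lemma order_rel:
  fixes F G :: "complex poly"
  assumes "smult c1 (pderiv F * G) = smult c2 (F * pderiv G)" "F \<noteq> 0" "G \<noteq> 0"
  shows "c1 * of_nat (order r F) = c2 * of_nat (order r G)"
proof -
  define q where "q = [:-r, 1:]"
  define e where "e = order r F"
  define og where "og = order r G"
  obtain A where A: "F = q^e * A" "\<not> q dvd A" using order_decomp[OF assms(2)] unfolding q_def e_def by blast
  obtain B where B: "G = q^og * B" "\<not> q dvd B" using order_decomp[OF assms(3)] unfolding q_def og_def by blast
  have qF: "q * pderiv F = q^e * (q * pderiv A + smult (of_nat e) A)"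
    unfolding A(1) pderiv_mult by (simp add: algebra_simps qpow[of r e, folded q_def])
  have qG: "q * pderiv G = q^og * (q * pderiv B + smult (of_nat og) B)"
    unfolding B(1) pderiv_mult by (simp add: algebra_simps qpow[of r og, folded q_def])
  have E1: "smult c1 ((q * pderiv F) * G) = smult c2 (F * (q * pderiv G))"
    using arg_cong[OF assms(1), of "\<lambda>x. q * x"] by (simp add: algebra_simps)
  have E2: "smult c1 ((q^e * (q * pderiv A + smult (of_nat e) A)) * (q^og * B)) = smult c2 ((q^e * A) * (q^og * (q * pderiv B + smult (of_nat og) B)))"
    using E1[unfolded qF qG] unfolding A(1)[symmetric] B(1)[symmetric] .
  have "q^(e+og) * (smult c1 ((q * pderiv A + smult (of_nat e) A) * B) - smult c2 (A * (q * pderiv B + smult (of_nat og) B))) = 0"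
    using E2 by (simp add: algebra_simps power_add)
  moreover have "q^(e+og) \<noteq> 0" by (simp add: q_def)
  ultimately have eq: "smult c1 ((q * pderiv A + smult (of_nat e) A) * B) = smult c2 (A * (q * pderiv B + smult (of_nat og) B))"
    by auto
  have pq: "poly q r = 0" by (simp add: q_def)
  have pA: "poly A r \<noteq> 0" using A(2) unfolding q_def by (simp add: poly_eq_0_iff_dvd)
  have pB: "poly B r \<noteq> 0" using B(2) unfolding q_def by (simp add: poly_eq_0_iff_dvd)
  have "c1 * (of_nat e * poly A r * poly B r) = c2 * (poly A r * (of_nat og * poly B r))"
    using arg_cong[OF eq, of "\<lambda>p. poly p r"] pq by simp
  then have "(c1 * of_nat e) * (poly A r * poly B r) = (c2 * of_nat og) * (poly A r * poly B r)"
    by (simp add: algebra_simps)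
  then show ?thesis using pA pB unfolding e_def og_def by simp
qed

definition bnd :: "weyl \<Rightarrow> nat" where
  "bnd A = degree A + (\<Sum>i\<le>degree A. degree (coeff A i))"

lemma bdd_bnd: "N \<ge> bnd A \<Longrightarrow> bdd N A"
proof -
  assume N: "N \<ge> bnd A"
  have "degree (coeff A i) \<le> N" for i
  proof (cases "i \<le> degree A")
    case True
    then have "degree (coeff A i) \<le> (\<Sum>i\<le>degree A. degree (coeff A i))"
      by (intro member_le_sum) auto
    then show ?thesis using N unfolding bnd_def by linarith
  next
    case False then show ?thesis by (simp add: coeff_eq_0)
  qed
  then show ?thesis using N unfolding bdd_def bnd_def by auto
qed

lemma cf_nz_bdd: "bdd N A \<Longrightarrow> cf A a i \<noteq> 0 \<Longrightarrow> a \<le> N \<and> i \<le> N"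
  unfolding bdd_def cf_def
  by (metis coeff_0 le_degree order.trans)

lemma coeff_mult_le:
  fixes p q :: "complex poly"
  assumes "degree p \<le> m" "degree q \<le> n"
  shows "coeff (p * q) (m + n) = coeff p m * coeff q n"
proof -
  have "coeff (p * q) (m + n) = (\<Sum>i\<le>m+n. coeff p i * coeff q (m + n - i))"
    by (simp add: coeff_mult)
  also have "\<dots> = (\<Sum>i\<le>m+n. if i = m then coeff p m * coeff q n else 0)"
  proof (intro sum.cong refl)
    fix i assume "i \<in> {..m+n}"
    show "coeff p i * coeff q (m + n - i) = (if i = m then coeff p m * coeff q n else 0)"
    proof (cases "i < m")
      case True then have "coeff q (m+n-i) = 0" using assms(2) by (intro coeff_eq_0) linarith
      then show ?thesis using True by simp
    next
      case False
      show ?thesis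
      proof (cases "i = m")
        case False' : False
        with False have "coeff p i = 0" using assms(1) by (intro coeff_eq_0) linarith
        then show ?thesis using False' by simp
      qed simp
    qed
  qed
  also have "\<dots> = coeff p m * coeff q n" by simp
  finally show ?thesis .
qed

lemma sum_unique_a:
  fixes al be a0 i d :: nat
  assumes "al > 0" "al*a0+be*i = d"
  shows "(\<Sum>a\<le>d. if al*a+be*i = d then f a else (0::complex)) = f a0"
proof -
  have "a0 \<le> d"
  proof -
    have "a0 \<le> al*a0" using assms(1) by simp
    then show ?thesis using assms(2) by linarith
  qed
  have "(\<Sum>a\<le>d. if al*a+be*i = d then f a else 0) = (\<Sum>a\<le>d. if a = a0 then f a0 else 0)"
  proof (intro sum.cong refl)
    fix a
    have "al*a+be*i = d \<longleftrightarrow> a = a0" using assms by auto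
    then show "(if al*a+be*i = d then f a else 0) = (if a = a0 then f a0 else 0)" by auto
  qed
  also have "\<dots> = f a0" using \<open>a0 \<le> d\<close> by simp
  finally show ?thesis .
qed

lemma q4: "([:-r,1:] ^ 4 :: complex poly) = [:r^4, -4*r^3, 6*r^2, -4*r, 1:]"
  by (simp add: numeral_eq_Suc algebra_simps)

lemma core:
  fixes L M :: weyl and al be :: nat
  assumes al: "al > 0" and be: "be > 0" and albe: "al + be \<le> 4*be"
    and dL: "degree L = 4" and c4: "coeff L 4 = 1" and c3: "coeff L 3 = 0"
    and wbL: "wb al be (4*be) L"
    and nontriv: "\<exists>j<4. coeff (dh al be (4*be) L) j \<noteq> 0"
    and M0: "M \<noteq> 0" and comm: "weyl_mult M L = weyl_mult L M"
  shows "even (degree M)"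
proof -
  define N where "N = bnd L + bnd M + 2"
  have bL: "bdd N L" and bM: "bdd N M" and N2: "2 \<le> N"
    by (auto simp: N_def intro!: bdd_bnd)
  define S where "S = {(a,i). a \<le> N \<and> i \<le> N \<and> cf M a i \<noteq> 0}"
  have finS: "finite S" unfolding S_def
    by (rule finite_subset[of _ "{..N} \<times> {..N}"]) auto
  define k where "k = degree M"
  have ck: "coeff M k \<noteq> 0" using M0 unfolding k_def by simp
  then obtain ak where ak: "cf M ak k \<noteq> 0" unfolding cf_def by (metis leading_coeff_0_iff coeff_0 poly_eqI)
  have akS: "(ak, k) \<in> S" using cf_nz_bdd[OF bM ak] ak unfolding S_def by auto
  define wt where "wt = (\<lambda>(a,i). al*a + be*i)"
  define d where "d = Max (wt ` S)"
  have wbM: "wb al be d M"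
    unfolding wb_def
  proof (intro allI impI)
    fix a i assume "cf M a i \<noteq> 0"
    then have "(a,i) \<in> S" using cf_nz_bdd[OF bM] unfolding S_def by auto
    then have "wt (a,i) \<le> d" unfolding d_def using finS by (intro Max_ge) auto
    then show "al*a+be*i \<le> d" by (simp add: wt_def)
  qed
  have "d \<in> wt ` S" unfolding d_def using finS akS by (intro Max_in) auto
  then obtain a0 i0 where a0S: "(a0,i0) \<in> S" and a0d: "al*a0+be*i0 = d"
    by (auto simp: wt_def)
  have bek: "be * k \<le> d" using wbM ak unfolding wb_def by fastforce
  define F where "F = dh al be (4*be) L"
  define G where "G = dh al be d M"
  have rel0: "pderiv F * dhx al be d M = pderiv G * dhx al be (4*be) L"
    unfolding F_def G_def using comm_id[OF bL bM N2 al wbL wbM _ comm[symmetric]] albe by simp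
  have rel: "smult (of_nat d) (pderiv F * G) = smult (of_nat (4*be)) (F * pderiv G)"
    using deriv_rel[OF al rel0[unfolded F_def G_def]] unfolding F_def G_def .
  have cG0: "coeff G i0 = cf M a0 i0"
    unfolding G_def coeff_dh by (rule sum_unique_a[OF al a0d])
  have G0: "G \<noteq> 0" using cG0 a0S unfolding S_def by auto
  have cGhigh: "coeff G i = 0" if "i > k" for i
    unfolding G_def coeff_dh using that cf_eq_0[of M i] unfolding k_def by (simp cong: if_cong)
  define g where "g = degree G"
  have gk: "g \<le> k" unfolding g_def using cGhigh by (meson degree_le not_le_imp_less)
  have cF: "coeff F j = (\<Sum>a\<le>4*be. if al*a+be*j = 4*be then cf L a j else 0)" for j
    unfolding F_def coeff_dh ..
  have cF4: "coeff F 4 = 1"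
    unfolding cF by (subst sum_unique_a[OF al, of 0]) (auto simp: cf_def c4)
  have cF3: "coeff F 3 = 0"
    unfolding cF by (simp add: cf_def c3 cong: if_cong)
  have cFhigh: "coeff F j = 0" if "j > 4" for j
    unfolding cF using that cf_eq_0[of L j] dL by (simp cong: if_cong)
  have dF: "degree F = 4"
    using cF4 cFhigh by (metis degree_le le_degree le_antisym not_le one_neq_zero)
  have F0: "F \<noteq> 0" using cF4 by auto
  have dg: "d = be * g"
  proof -
    have dF': "degree (pderiv F) \<le> 3" using dF by (simp add: degree_pderiv)
    have cF'3: "coeff (pderiv F) 3 = 4" using cF4 by (simp add: coeff_pderiv)
    have lhs: "coeff (smult (of_nat d) (pderiv F * G)) (3 + g) = of_nat d * (4 * coeff G g)"
      using coeff_mult_le[OF dF', of G g] cF'3 unfolding g_def by simp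
    have lcG: "coeff G g \<noteq> 0" unfolding g_def using G0 by simp
    show ?thesis
    proof (cases g)
      case 0
      then have "pderiv G = 0" unfolding g_def by (simp add: pderiv_eq_0_iff)
      then have "of_nat d * (4 * coeff G g) = 0" using lhs rel by simp
      then show ?thesis using lcG 0 by simp
    next
      case (Suc g')
      have dG': "degree (pderiv G) \<le> g'" using Suc unfolding g_def by (simp add: degree_pderiv)
      have cG': "coeff (pderiv G) g' = of_nat g * coeff G g" using Suc by (simp add: coeff_pderiv)
      have "coeff (smult (of_nat (4*be)) (F * pderiv G)) (4 + g') = of_nat (4*be) * (of_nat g * coeff G g)"
        using coeff_mult_le[of F 4 "pderiv G" g'] dF dG' cF4 cG' by simp
      moreover have "3 + g = 4 + g'" using Suc by simp
      ultimately have "of_nat d * (4 * coeff G g) = of_nat (4*be) * (of_nat g * coeff G g)"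
        using lhs rel by metis
      then have "(of_nat d :: complex) = of_nat (be * g)" using lcG by (simp add: algebra_simps)
      then show ?thesis by (simp only: of_nat_eq_iff)
    qed
  qed
  have gk2: "g = k" using dg bek gk be by (metis le_antisym mult_le_cancel1 le_neq_implies_less)
  obtain r where r: "poly F r = 0"
    using fundamental_theorem_of_algebra_alt[of F] dF by fastforce
  define e where "e = order r F"
  define og where "og = order r G"
  have e1: "e \<noteq> 0" using r F0 order_root unfolding e_def by blast
  have e4: "e \<le> 4" using order_degree[OF F0] dF unfolding e_def by simp
  have "of_nat d * of_nat e = of_nat (4*be) * (of_nat og :: complex)"
    using order_rel[OF rel F0 G0, of r] unfolding e_def og_def .
  then have "d * e = 4*be*og" by (simp only: of_nat_mult[symmetric] of_nat_eq_iff)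
  then have "be * (k * e) = be * (4 * og)" using dg gk2 by (simp add: algebra_simps)
  then have keo: "k * e = 4 * og" using be by simp
  have e_ne4: "e \<noteq> 4"
  proof
    assume "e = 4"
    obtain A where A: "F = [:-r,1:]^4 * A" using order_decomp[OF F0, of r] \<open>e = 4\<close> unfolding e_def by auto
    have A0: "A \<noteq> 0" using A F0 by auto
    have "degree F = 4 + degree A" using A A0 by (simp add: degree_mult_eq degree_power_eq)
    then have "degree A = 0" using dF by simp
    then obtain c where Ac: "A = [:c:]" by (metis degree_eq_zeroE)
    have FF: "F = [:c*r^4, -4*c*r^3, 6*c*r^2, -4*c*r, c:]" using A Ac q4[of r] by (simp add: algebra_simps)
    have "c = 1" using cF4 FF by (simp add: numeral_eq_Suc)
    moreover have "-4*c*r = 0" using cF3 FF by (simp add: numeral_eq_Suc)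
    ultimately have "r = 0" by simp
    then have "\<forall>j<4. coeff F j = 0" using FF by (auto simp: numeral_eq_Suc less_Suc_eq)
    then show False using nontriv unfolding F_def by auto
  qed
  have "e = 1 \<or> e = 2 \<or> e = 3" using e1 e4 e_ne4 by auto
  then show ?thesis unfolding k_def[symmetric] using keo by (elim disjE; simp; presburger)
qed

lemma DD: "weyl_mult weyl_D weyl_D = monom 1 2"
  unfolding weyl_mult_def weyl_D_def
  by (simp add: degree_monom_eq numeral_2_eq_2 coeff_monom)

lemma UD: "weyl_mult (weyl_poly U) weyl_D = monom U 1"
  unfolding weyl_mult_def weyl_D_def weyl_poly_def
  by (simp add: degree_monom_eq coeff_monom)

lemma degP: "degree (monom 1 2 + [:V:] :: weyl) = 2"
  by (simp add: degree_add_eq_left degree_monom_eq)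

lemma two_monom: "(2::weyl) * monom V n = monom (smult 2 V) n"
proof -
  have "smult (2::complex) V = V + V" by (metis one_add_one smult_1_left smult_add_left)
  moreover have "(2::weyl) * monom V n = monom V n + monom V n" by (rule mult_2)
  ultimately show ?thesis by (simp only: add_monom)
qed

lemma PP: "weyl_mult (monom 1 2 + [:V:]) (monom 1 2 + [:V:]) =
   monom 1 4 + monom (smult 2 V) 2 + monom (smult 2 (pderiv V)) 1 + [:pderiv (pderiv V) + V*V:]"
  unfolding weyl_mult_def degP
  apply (simp add: numeral_2_eq_2 coeff_monom)
  apply (simp add: monom_0 one_pCons[symmetric] smult_monom[symmetric] numeral_eq_Suc)
  apply (simp add: monom_0 add_monom[symmetric] add_monom algebra_simps flip: smult_monom)
  apply (simp add: two_monom)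
  done

lemma L4_eq: "L4 U V W = monom 1 4 + monom (smult 2 V) 2 + monom (smult 2 (pderiv V) + U) 1 + [:pderiv (pderiv V) + V*V + W:]"
  unfolding L4_def Let_def DD UD unfolding weyl_poly_def PP
  by (simp add: add_monom[symmetric] algebra_simps)

lemma wb_intro:
  assumes "degree L = 4" "\<And>i. i \<le> 4 \<Longrightarrow> coeff L i \<noteq> 0 \<Longrightarrow> al * degree (coeff L i) + be*i \<le> D"
  shows "wb al be D L"
  unfolding wb_def
proof (intro allI impI)
  fix a i assume nz: "cf L a i \<noteq> 0"
  then have ci: "coeff L i \<noteq> 0" by (auto simp: cf_def)
  then have i4: "i \<le> 4" using assms(1) le_degree by fastforce
  have "a \<le> degree (coeff L i)" using nz le_degree unfolding cf_def by blast
  then have "al * a \<le> al * degree (coeff L i)" by simp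
  then show "al*a+be*i \<le> D" using assms(2)[OF i4 ci] by linarith
qed

theorem mainTheorem7:
  fixes U V W :: "complex poly"
  assumes "weyl_order (L4 U V W) = 4"
    and "weyl_irreducible (L4 U V W)"
    and "U \<noteq> 0 \<Longrightarrow> 2 * degree V > degree U"
    and "W \<noteq> 0 \<Longrightarrow> 2 * degree V > degree W"
  shows "\<forall>M :: weyl. M \<noteq> 0 \<longrightarrow> weyl_mult M (L4 U V W) = weyl_mult (L4 U V W) M
           \<longrightarrow> even (weyl_order M)"
proof (intro allI impI)
  fix M :: weyl
  assume M0: "M \<noteq> 0" and comm: "weyl_mult M (L4 U V W) = weyl_mult (L4 U V W) M"
  define L where "L = L4 U V W"
  define n where "n = degree V"
  define L1 where "L1 = smult 2 (pderiv V) + U"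
  define L0 where "L0 = pderiv (pderiv V) + V*V + W"
  have Leq: "L = monom 1 4 + monom (smult 2 V) 2 + monom L1 1 + [:L0:]"
    unfolding L_def L1_def L0_def by (rule L4_eq)
  have dL: "degree L = 4" using assms(1) unfolding L_def weyl_order_def .
  have cL4: "coeff L 4 = 1" and cL3: "coeff L 3 = 0" and cL2: "coeff L 2 = smult 2 V"
    and cL1: "coeff L 1 = L1" and cL0: "coeff L 0 = L0"
    unfolding Leq by (simp_all add: coeff_monom numeral_eq_Suc)
  have n1: "n \<ge> 1"
  proof (rule ccontr)
    assume "\<not> n \<ge> 1"
    then have n0: "degree V = 0" unfolding n_def by simp
    have U0: "U = 0" using assms(3) n0 by fastforce
    have W0: "W = 0" using assms(4) n0 by fastforce
    define P where "P = weyl_mult weyl_D weyl_D + weyl_poly V"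
    have "L4 U V W = weyl_mult P P"
      unfolding L4_def P_def Let_def U0 W0 UD by (simp add: weyl_poly_def)
    moreover have "weyl_order P = 2" unfolding P_def weyl_order_def DD weyl_poly_def by (rule degP)
    ultimately show False using assms(2) unfolding weyl_irreducible_def by (metis zero_less_numeral)
  qed
  define v where "v = lead_coeff V"
  have V0: "V \<noteq> 0" using n1 unfolding n_def by auto
  have v0: "v \<noteq> 0" using V0 unfolding v_def by simp
  have dV2: "degree (smult 2 V) = n" unfolding n_def by simp
  have dVV: "degree (pderiv (pderiv V)) < 2*n" using n1 unfolding n_def by (simp add: degree_pderiv)
  have dW: "degree W < 2*n \<or> W = 0" using assms(4) unfolding n_def by auto
  have dL0: "degree L0 \<le> 2*n"
  proof -
    have "degree (V*V) \<le> 2*n" using degree_mult_le[of V V] unfolding n_def by simp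
    moreover have "degree W \<le> 2*n" using dW by auto
    ultimately show ?thesis unfolding L0_def using dVV
      by (meson degree_add_le less_imp_le)
  qed
  have cL0top: "coeff L0 (2*n) = v*v"
  proof -
    have "coeff (pderiv (pderiv V)) (2*n) = 0" using dVV by (simp add: coeff_eq_0)
    moreover have "coeff W (2*n) = 0" using dW by (auto simp: coeff_eq_0)
    moreover have "coeff (V*V) (2*n) = v*v"
      using coeff_mult_degree_sum[of V V] unfolding v_def n_def by (simp add: mult_2)
    ultimately show ?thesis unfolding L0_def by simp
  qed
  show "even (weyl_order M)"
  proof (cases "L1 = 0 \<or> 2 * degree L1 \<le> 3*n")
    case True
    have wbL: "wb 2 n (4*n) L"
    proof (rule wb_intro[OF dL])
      fix i assume i4: "i \<le> (4::nat)" and nz: "coeff L i \<noteq> 0"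
      have "i = 0 \<or> i = 1 \<or> i = 2 \<or> i = 3 \<or> i = 4" using i4 by auto
      then show "2 * degree (coeff L i) + n*i \<le> 4*n"
      proof (elim disjE)
        assume "i = 1" then show ?thesis using True nz cL1 by auto
      qed (use cL4 cL3 cL2 cL0 dV2 dL0 nz in auto)
    qed
    have nt: "coeff (dh 2 n (4*n) L) 0 \<noteq> 0"
    proof -
      have "coeff (dh 2 n (4*n) L) 0 = cf L (2*n) 0"
        unfolding coeff_dh by (rule sum_unique_a) auto
      also have "\<dots> = v*v" unfolding cf_def cL0 cL0top ..
      finally show ?thesis using v0 by simp
    qed
    have nt': "\<exists>j<4. coeff (dh 2 n (4*n) L) j \<noteq> 0" using nt by (intro exI[of _ 0]) auto
    show ?thesis unfolding weyl_order_def
      by (rule core[of 2 n L M]) (use n1 dL cL4 cL3 wbL nt' M0 comm in \<open>auto simp: L_def\<close>)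
  next
    case False
    define e1 where "e1 = degree L1"
    have L10: "L1 \<noteq> 0" and e1n: "3*n < 2*e1" using False unfolding e1_def by auto
    have wbL: "wb 3 e1 (4*e1) L"
    proof (rule wb_intro[OF dL])
      fix i assume i4: "i \<le> (4::nat)" and nz: "coeff L i \<noteq> 0"
      have "i = 0 \<or> i = 1 \<or> i = 2 \<or> i = 3 \<or> i = 4" using i4 by auto
      then show "3 * degree (coeff L i) + e1*i \<le> 4*e1"
        by (elim disjE) (use cL4 cL3 cL2 cL0 cL1 dV2 dL0 nz e1n e1_def in auto)
    qed
    have nt: "coeff (dh 3 e1 (4*e1) L) 1 \<noteq> 0"
    proof -
      have "coeff (dh 3 e1 (4*e1) L) 1 = cf L e1 1"
        unfolding coeff_dh by (rule sum_unique_a) auto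
      also have "\<dots> = lead_coeff L1" unfolding cf_def cL1 e1_def ..
      finally show ?thesis using L10 by simp
    qed
    have nt': "\<exists>j<4. coeff (dh 3 e1 (4*e1) L) j \<noteq> 0" using nt by (intro exI[of _ 1]) auto
    show ?thesis unfolding weyl_order_def
      by (rule core[of 3 e1 L M]) (use e1n dL cL4 cL3 wbL nt' M0 comm in \<open>auto simp: L_def\<close>)
  qed
qed

end
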